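(* Let $N\ge 1$, let $\mathcal{L}_e$ be a finite index set of size $L_e$, and for each $\ell\in\mathcal{L}_e$ let $\mathbf{a}_\ell\in\mathbb{R}^N$ and $r_\ell>0$, $x_\ell>0$ be given. For $\mathbf{b}=(b_\ell)_{\ell\in\mathcal{L}_e}\in\mathbb{R}^{L_e}$ define $$\mathbf{R}^{-1}(\mathbf{b})=\frac12\sum_{\ell\in\mathcal{L}_e}\frac{b_\ell}{r_\ell}\mathbf{a}_\ell\mathbf{a}_\ell^\top,\qquad \mathbf{X}^{-1}(\mathbf{b})=\frac12\sum_{\ell\in\mathcal{L}_e}\frac{b_\ell}{x_\ell}\mathbf{a}_\ell\mathbf{a}_\ell^\top,$$ and, whenever these two matrices are invertible, let $\mathbf{R}(\mathbf{b}),\mathbf{X}(\mathbf{b})$ denote their inverses. Let $\boldsymbol{\Sigma}_p,\boldsymbol{\Sigma}_q\in\mathbb{R}^{N\times N}$ be symmetric, $\boldsymbol{\Sigma}_{pq}\in\mathbb{R}^{N\times N}$, $\sigma_n^2\ge 0$, and $$\boldsymbol{\Sigma}(\mathbf{b})=\mathbf{R}(\mathbf{b})\boldsymbol{\Sigma}_p\mathbf{R}(\mathbf{b})+\mathbf{X}(\mathbf{b})\boldsymbol{\Sigma}_q\mathbf{X}(\mathbf{b})+\mathbf{R}(\mathbf{b})\boldsymbol{\Sigma}_{pq}\mathbf{X}(\mathbf{b})+\mathbf{X}(\mathbf{b})\boldsymbol{\Sigma}_{pq}^\top\mathbf{R}(\mathbf{b})+\sigma_n^2\mathbf{I}_N.$$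 Let $\hat{\boldsymbol{\Sigma}}\in\mathbb{R}^{N\times N}$ be symmetric positive semidefinite and $f(\mathbf{b})=\log|\boldsymbol{\Sigma}(\mathbf{b})|+\operatorname{trace}(\boldsymbol{\Sigma}^{-1}(\mathbf{b})\hat{\boldsymbol{\Sigma}})$. Then at any $\mathbf{b}$ where $\mathbf{R}(\mathbf{b})$, $\mathbf{X}(\mathbf{b})$ exist and $\boldsymbol{\Sigma}(\mathbf{b})\succ 0$, for every $\ell\in\mathcal{L}_e$, $$\frac{\partial f(\mathbf{b})}{\partial b_\ell}=-\frac{1}{r_\ell}\mathbf{a}_\ell^\top\mathbf{R}\boldsymbol{\Sigma}_p\mathbf{R}\mathbf{F}\mathbf{R}\mathbf{a}_\ell-\frac{1}{x_\ell}\mathbf{a}_\ell^\top\mathbf{X}\boldsymbol{\Sigma}_q\mathbf{X}\mathbf{F}\mathbf{X}\mathbf{a}_\ell-\frac{1}{r_\ell}\mathbf{a}_\ell^\top\mathbf{R}\boldsymbol{\Sigma}_{pq}\mathbf{X}\mathbf{F}\mathbf{R}\mathbf{a}_\ell-\frac{1}{x_\ell}\mathbf{a}_\ell^\top\mathbf{X}\mathbf{F}\mathbf{R}\boldsymbol{\Sigma}_{pq}\mathbf{X}\mathbf{a}_\ell,$$ where $\mathbf{R}=\mathbf{R}(\mathbf{b})$, $\mathbf{X}=\mathbf{X}(\mathbf{b})$ and $\mathbf{F}=\mathbf{F}(\mathbf{b}):=\boldsymbol{\Sigma}^{-1}(\mathbf{b})-\boldsymbol{\Sigma}^{-1}(\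mathbf{b})\hat{\boldsymbol{\Sigma}}\boldsymbol{\Sigma}^{-1}(\mathbf{b})$.
   Context: $|\cdot|$ denotes the determinant. In the application, $\mathbf{a}_\ell^\top$ are rows of a reduced branch-bus incidence matrix of a distribution grid (substation column removed), $r_\ell,x_\ell$ are line resistances and reactances, $\mathbf{b}$ is a line-status indicator vector, $\boldsymbol{\Sigma}_p=\mathbb{E}[\tilde{\mathbf p}\tilde{\mathbf p}^\top]$, $\boldsymbol{\Sigma}_q=\mathbb{E}[\tilde{\mathbf q}\tilde{\mathbf q}^\top]$, $\boldsymbol{\Sigma}_{pq}=\mathbb{E}[\tilde{\mathbf p}\tilde{\mathbf q}^\top]$ are covariances of differential active/reactive power injections, and $\hat{\boldsymbol{\Sigma}}$ is the sample covariance of differential squared-voltage data. *)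

theory Defs
  imports "HOL-Analysis.Analysis"
begin

definition outer :: "real^'n \<Rightarrow> real^'n^'n" where
  "outer u = (\<chi> i j. u $ i * u $ j)"

definition Rinv :: "('l::finite \<Rightarrow> real^'n) \<Rightarrow> ('l \<Rightarrow> real) \<Rightarrow> real^'l \<Rightarrow> real^'n^'n" where
  "Rinv a r b = (1/2) *\<^sub>R (\<Sum>l\<in>UNIV. (b $ l / r l) *\<^sub>R outer (a l))"

definition Xinv :: "('l::finite \<Rightarrow> real^'n) \<Rightarrow> ('l \<Rightarrow> real) \<Rightarrow> real^'l \<Rightarrow> real^'n^'n" where
  "Xinv a x b = (1/2) *\<^sub>R (\<Sum>l\<in>UNIV. (b $ l / x l) *\<^sub>R outer (a l))"

definition SigmaM :: "('l::finite \<Rightarrow> real^'n) \<Rightarrow> ('l \<Rightarrow> real) \<Rightarrow> ('l \<Rightarrow> real)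
   \<Rightarrow> real^'n^'n \<Rightarrow> real^'n^'n \<Rightarrow> real^'n^'n \<Rightarrow> real \<Rightarrow> real^'l \<Rightarrow> real^'n^'n" where
  "SigmaM a r x Sp Sq Spq sn2 b =
     (let R = matrix_inv (Rinv a r b); X = matrix_inv (Xinv a x b) in
      R ** Sp ** R + X ** Sq ** X + R ** Spq ** X + X ** transpose Spq ** R + sn2 *\<^sub>R mat 1)"

definition fobj :: "('l::finite \<Rightarrow> real^'n) \<Rightarrow> ('l \<Rightarrow> real) \<Rightarrow> ('l \<Rightarrow> real)
   \<Rightarrow> real^'n^'n \<Rightarrow> real^'n^'n \<Rightarrow> real^'n^'n \<Rightarrow> real \<Rightarrow> real^'n^'n \<Rightarrow> real^'l \<Rightarrow> real" where
  "fobj a r x Sp Sq Spq sn2 Sh b =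
     (let S = SigmaM a r x Sp Sq Spq sn2 b in ln (det S) + trace (matrix_inv S ** Sh))"

definition pos_def :: "real^'n^'n \<Rightarrow> bool" where
  "pos_def M \<longleftrightarrow> transpose M = M \<and> (\<forall>v. v \<noteq> 0 \<longrightarrow> v \<bullet> (M *v v) > 0)"

definition pos_semidef :: "real^'n^'n \<Rightarrow> bool" where
  "pos_semidef M \<longleftrightarrow> transpose M = M \<and> (\<forall>v. v \<bullet> (M *v v) \<ge> 0)"

end

theory Submission
  imports Defs
begin

lemma mm_add_r: "((A::real^'n^'m) + B) ** C = A ** C + B ** C"
  by (simp add: matrix_matrix_mult_def vec_eq_iff algebra_simps sum.distrib)
lemma mm_add_l: "(A::real^'n^'m) ** (B + C) = A ** B + A ** C"
  by (simp add: matrix_matrix_mult_def vec_eq_iff algebra_simps sum.distrib)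
lemma mm_neg_r: "(- (A::real^'n^'m)) ** C = - (A ** C)"
  by (simp add: matrix_matrix_mult_def vec_eq_iff sum_negf)
lemma mm_neg_l: "(A::real^'n^'m) ** (- C) = - (A ** C)"
  by (simp add: matrix_matrix_mult_def vec_eq_iff sum_negf)
lemma mm_diff_l: "(A::real^'n^'m) ** (B - C) = A ** B - A ** C"
  by (simp add: matrix_matrix_mult_def vec_eq_iff algebra_simps sum_subtractf)
lemma mm_diff_r: "((A::real^'n^'m) - B) ** C = A ** C - B ** C"
  by (simp add: matrix_matrix_mult_def vec_eq_iff algebra_simps sum_subtractf)
lemma mm_scale_r: "((c::real) *\<^sub>R (A::real^'n^'m)) ** C = c *\<^sub>R (A ** C)"
  by (simp add: matrix_matrix_mult_def vec_eq_iff sum_distrib_left algebra_simps)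
lemma mm_scale_l: "(A::real^'n^'m) ** ((c::real) *\<^sub>R C) = c *\<^sub>R (A ** C)"
  by (simp add: matrix_matrix_mult_def vec_eq_iff sum_distrib_left algebra_simps)
lemma mm_zero_l: "(0::real^'n^'m) ** C = 0"
  by (simp add: matrix_matrix_mult_def vec_eq_iff)
lemma mm_zero_r: "(A::real^'n^'m) ** (0::real^'k^'n) = 0"
  by (simp add: matrix_matrix_mult_def vec_eq_iff)
lemma trace_scale: "trace ((c::real) *\<^sub>R (A::real^'n^'n)) = c * trace A"
  by (simp add: trace_def sum_distrib_left)
lemma trace_neg: "trace (- (A::real^'n^'n)) = - trace A"
  by (simp add: trace_def sum_negf)

definition mder :: "(real \<Rightarrow> real^'n^'m) \<Rightarrow> real^'n^'m \<Rightarrow> bool" where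
  "mder M D \<longleftrightarrow> (\<forall>i j. ((\<lambda>t. M t $ i $ j) has_real_derivative D $ i $ j) (at 0))"

lemma mder_const: "mder (\<lambda>t. A) 0"
  by (simp add: mder_def)
lemma mder_lin: "mder (\<lambda>t. A + t *\<^sub>R B) B"
  unfolding mder_def by (auto intro!: derivative_eq_intros)
lemma mder_add: "mder M D \<Longrightarrow> mder N E \<Longrightarrow> mder (\<lambda>t. M t + N t) (D + E)"
  unfolding mder_def by (auto intro!: derivative_eq_intros)
lemma mder_diff: "mder M D \<Longrightarrow> mder N E \<Longrightarrow> mder (\<lambda>t. M t - N t) (D - E)"
  unfolding mder_def by (auto intro!: derivative_eq_intros)
lemma mder_mult: "mder M D \<Longrightarrow> mder N E \<Longrightarrow> M 0 = A \<Longrightarrow> N 0 = B \<Longrightarrow>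
   mder (\<lambda>t. (M t :: real^'k^'m) ** (N t :: real^'n^'k)) (D ** B + A ** E)"
  unfolding mder_def matrix_matrix_mult_def
  by (auto intro!: derivative_eq_intros DERIV_sum simp: sum.distrib mult.commute)
lemma mder_unique: "mder M D \<Longrightarrow> mder M E \<Longrightarrow> D = E"
  unfolding mder_def vec_eq_iff using DERIV_unique by blast
lemma mder_trace: "mder M D \<Longrightarrow> ((\<lambda>t. trace (M t)) has_real_derivative trace D) (at 0)"
  unfolding mder_def trace_def by (auto intro!: DERIV_sum)
lemma mder_ev: "mder M D \<Longrightarrow> eventually (\<lambda>t. M t = N t) (nhds 0) \<Longrightarrow> mder N D"
  unfolding mder_def
proof (intro allI)
  fix i j assume a: "\<forall>i j. ((\<lambda>t. M t $ i $ j) has_real_derivative D $ i $ j) (at 0)"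
    and e: "eventually (\<lambda>t. M t = N t) (nhds 0)"
  have "eventually (\<lambda>t. M t $ i $ j = N t $ i $ j) (nhds 0)"
    using e by (rule eventually_mono) simp
  then show "((\<lambda>t. N t $ i $ j) has_real_derivative D $ i $ j) (at 0)"
    using a DERIV_cong_ev[of 0 0 "\<lambda>t. M t $ i $ j" "\<lambda>t. N t $ i $ j"] by blast
qed

lemma det_deriv_gen:
  fixes M :: "real \<Rightarrow> real^'n^'n"
  assumes "mder M D"
  shows "((\<lambda>t. det (M t)) has_real_derivative
     (\<Sum>p\<in>{p. p permutes (UNIV::'n set)}. of_int (sign p) *
        (\<Sum>x\<in>UNIV. D $ x $ p x * (\<Prod>y\<in>UNIV-{x}. M 0 $ y $ p y)))) (at 0)"
  unfolding det_def
  apply (rule DERIV_sum)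
  apply (rule DERIV_cmult)
  apply (rule has_field_derivative_prod)
  using assms unfolding mder_def by blast

lemma perm_nonid_term:
  fixes p :: "'n::finite \<Rightarrow> 'n"
  assumes p: "p permutes UNIV" and ne: "p \<noteq> id"
  shows "(\<Prod>y\<in>UNIV-{x}. (mat 1 :: real^'n^'n) $ y $ p y) = 0"
proof -
  obtain k where k: "p k \<noteq> k" using ne by (auto simp: fun_eq_iff)
  have k2: "p (p k) \<noteq> p k"
    using k p by (metis permutes_inj injD)
  have "\<exists>y\<in>UNIV-{x}. (mat 1 :: real^'n^'n) $ y $ p y = 0"
  proof (cases "k = x")
    case True
    then show ?thesis using k k2 by (intro bexI[of _ "p k"]) (auto simp: mat_def)
  next
    case False
    then show ?thesis using k by (intro bexI[of _ k]) (auto simp: mat_def)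
  qed
  then show ?thesis by (simp add: prod_zero_iff)
qed

lemma det_deriv_id:
  fixes M :: "real \<Rightarrow> real^'n^'n"
  assumes "mder M D" and M0: "M 0 = mat 1"
  shows "((\<lambda>t. det (M t)) has_real_derivative trace D) (at 0)"
proof -
  let ?S = "{p. p permutes (UNIV::'n set)}"
  let ?g = "\<lambda>p. of_int (sign p) * (\<Sum>x\<in>UNIV. D $ x $ p x * (\<Prod>y\<in>UNIV-{x}. M 0 $ y $ p y))"
  have fin: "finite ?S" by (simp add: finite_permutations)
  have idS: "id \<in> ?S" by (simp add: permutes_id)
  have "sum ?g ?S = ?g id + sum ?g (?S - {id})"
    by (rule sum.remove[OF fin idS])
  also have "sum ?g (?S - {id}) = 0"
    by (rule sum.neutral) (auto simp: M0 perm_nonid_term)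
  also have "?g id = trace D"
    by (simp add: sign_id M0 trace_def mat_def)
  finally have "sum ?g ?S = trace D" by simp
  with det_deriv_gen[OF assms(1)] show ?thesis by simp
qed

lemma minv: 
  fixes A :: "real^'n^'n"
  assumes "invertible A"
  shows "A ** matrix_inv A = mat 1" "matrix_inv A ** A = mat 1"
proof -
  have "\<exists>A'. A ** A' = mat 1 \<and> A' ** A = mat 1" using assms by (simp add: invertible_def)
  then have "A ** matrix_inv A = mat 1 \<and> matrix_inv A ** A = mat 1"
    unfolding matrix_inv_def by (rule someI_ex)
  then show "A ** matrix_inv A = mat 1" "matrix_inv A ** A = mat 1" by auto
qed

lemma minv_sym:
  fixes A :: "real^'n^'n"
  assumes "invertible A" "transpose A = A"
  shows "transpose (matrix_inv A) = matrix_inv A"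
proof -
  have "transpose (matrix_inv A) ** A = mat 1"
    by (metis assms matrix_transpose_mul minv(1) transpose_mat)
  then have "transpose (matrix_inv A) = transpose (matrix_inv A) ** (A ** matrix_inv A)"
    by (simp add: minv(1)[OF assms(1)])
  also have "\<dots> = matrix_inv A"
    by (simp add: matrix_mul_assoc \<open>transpose (matrix_inv A) ** A = mat 1\<close>)
  finally show ?thesis .
qed

lemma mder_lconst: 
  assumes "mder N E" shows "mder (\<lambda>t. (C::real^'k^'m) ** (N t :: real^'n^'k)) (C ** E)"
proof -
  have "mder (\<lambda>t. C ** N t) (0 ** N 0 + C ** E)"
    by (rule mder_mult[OF mder_const assms refl refl])
  then show ?thesis by (simp add: mm_zero_l)
qed

lemma mder_rconst:
  assumes "mder N E" shows "mder (\<lambda>t. (N t :: real^'k^'m) ** (C::real^'n^'k)) (E ** C)"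
proof -
  have "mder (\<lambda>t. N t ** C) (E ** C + N 0 ** 0)"
    by (rule mder_mult[OF assms mder_const refl refl])
  then show ?thesis by (simp add: mm_zero_r)
qed

lemma det_deriv:
  fixes M :: "real \<Rightarrow> real^'n^'n"
  assumes d: "mder M D" and inv: "invertible (M 0)"
  shows "((\<lambda>t. det (M t)) has_real_derivative det (M 0) * trace (matrix_inv (M 0) ** D)) (at 0)"
proof -
  let ?Mi = "matrix_inv (M 0)"
  have e: "det (M t) = det (M 0) * det (?Mi ** M t)" for t
  proof -
    have "M t = M 0 ** (?Mi ** M t)"
      by (simp add: matrix_mul_assoc minv(1)[OF inv])
    then show ?thesis by (metis det_mul)
  qed
  have "mder (\<lambda>t. ?Mi ** M t) (?Mi ** D)" by (rule mder_lconst[OF d])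
  moreover have "?Mi ** M 0 = mat 1" by (rule minv(2)[OF inv])
  ultimately have "((\<lambda>t. det (?Mi ** M t)) has_real_derivative trace (?Mi ** D)) (at 0)"
    by (rule det_deriv_id)
  then have "((\<lambda>t. det (M 0) * det (?Mi ** M t)) has_real_derivative det (M 0) * trace (?Mi ** D)) (at 0)"
    by (rule DERIV_cmult)
  then show ?thesis by (simp add: e[symmetric])
qed

lemma mder_cont: "mder M D \<Longrightarrow> isCont (\<lambda>t. M t $ i $ j) 0"
  unfolding mder_def using DERIV_isCont by blast

lemma det_ev_nz:
  fixes M :: "real \<Rightarrow> real^'n^'n"
  assumes d: "mder M D" and inv: "invertible (M 0)"
  shows "eventually (\<lambda>t. det (M t) \<noteq> 0) (nhds 0)"
proof -
  have "isCont (\<lambda>t. det (M t)) 0" using det_deriv[OF d inv] DERIV_isCont by blast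
  then have "((\<lambda>t. det (M t)) \<longlongrightarrow> det (M 0)) (nhds 0)"
    unfolding isCont_def using tendsto_at_iff_tendsto_nhds[of "\<lambda>t. det (M t)" 0] by simp
  moreover have "det (M 0) \<noteq> 0" using inv invertible_det_nz by blast
  ultimately show ?thesis by (rule tendsto_imp_eventually_ne)
qed

lemma minv_cramer:
  fixes A :: "real^'n^'n"
  assumes "invertible A"
  shows "matrix_inv A $ k $ j = det (\<chi> i j'. if j' = k then axis j 1 $ i else A $ i $ j') / det A"
proof -
  have d0: "det A \<noteq> 0" using assms invertible_det_nz by blast
  have "A *v (matrix_inv A *v axis j 1) = axis j 1"
    by (simp add: matrix_vector_mul_assoc minv(1)[OF assms])
  then have "matrix_inv A *v axis j 1 = (\<chi> k. det(\<chi> i j'. if j'=k then axis j 1 $ i else A$i$j') / det A)"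
    using cramer[OF d0] by blast
  moreover have "(matrix_inv A *v axis j 1) $ k = matrix_inv A $ k $ j"
    by (simp add: matrix_vector_mult_def axis_def if_distrib cong: if_cong)
  ultimately show ?thesis by simp
qed

lemma mder_inv:
  fixes M :: "real \<Rightarrow> real^'n^'n"
  assumes d: "mder M D" and inv: "invertible (M 0)"
  shows "mder (\<lambda>t. matrix_inv (M t)) (- (matrix_inv (M 0) ** D ** matrix_inv (M 0)))"
proof -
  let ?Mi = "matrix_inv (M 0)"
  have ev: "eventually (\<lambda>t. det (M t) \<noteq> 0) (nhds 0)" by (rule det_ev_nz[OF d inv])
  have d0: "det (M 0) \<noteq> 0" using inv invertible_det_nz by blast
  have ex: "\<exists>g. ((\<lambda>t. matrix_inv (M t) $ k $ j) has_real_derivative g) (at 0)" for k j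
  proof -
    define C where "C = (\<lambda>t. (\<chi> i j'. if j' = k then axis j 1 $ i else M t $ i $ j') :: real^'n^'n)"
    have "mder C (\<chi> i j'. if j' = k then 0 else D $ i $ j')"
      using d unfolding mder_def C_def by auto
    then obtain c where c: "((\<lambda>t. det (C t)) has_real_derivative c) (at 0)"
      using det_deriv_gen by blast
    obtain m where m: "((\<lambda>t. det (M t)) has_real_derivative m) (at 0)"
      using det_deriv_gen[OF d] by blast
    have q: "((\<lambda>t. det (C t) / det (M t)) has_real_derivative (c * det (M 0) - det (C 0) * m) / (det (M 0) * det (M 0))) (at 0)"
      using DERIV_divide[OF c m d0] by simp
    have evq: "eventually (\<lambda>t. det (C t) / det (M t) = matrix_inv (M t) $ k $ j) (nhds 0)"
      using ev
    proof (rule eventually_mono)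
      fix t assume "det (M t) \<noteq> 0"
      then have "invertible (M t)" using invertible_det_nz by blast
      then show "det (C t) / det (M t) = matrix_inv (M t) $ k $ j"
        unfolding C_def by (simp add: minv_cramer)
    qed
    have "((\<lambda>t. matrix_inv (M t) $ k $ j) has_real_derivative (c * det (M 0) - det (C 0) * m) / (det (M 0) * det (M 0))) (at 0)"
      using q unfolding DERIV_cong_ev[OF refl evq refl] .
    then show ?thesis by blast
  qed
  then obtain g where g: "\<And>k j. ((\<lambda>t. matrix_inv (M t) $ k $ j) has_real_derivative g k j) (at 0)"
    by metis
  define G' :: "real^'n^'n" where "G' = (\<chi> k j. g k j)"
  have mg: "mder (\<lambda>t. matrix_inv (M t)) G'"
    unfolding mder_def G'_def using g by simp
  have m1: "mder (\<lambda>t. M t ** matrix_inv (M t)) (D ** ?Mi + M 0 ** G')"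
    by (rule mder_mult[OF d mg refl refl])
  have "eventually (\<lambda>t. mat 1 = M t ** matrix_inv (M t)) (nhds 0)"
    using ev by (rule eventually_mono) (metis invertible_det_nz minv(1))
  then have m2: "mder (\<lambda>t. M t ** matrix_inv (M t)) 0"
    by (rule mder_ev[OF mder_const])
  have z: "D ** ?Mi + M 0 ** G' = 0" by (rule mder_unique[OF m1 m2])
  have "G' = ?Mi ** (M 0 ** G')"
    by (simp add: matrix_mul_assoc minv(2)[OF inv])
  also have "M 0 ** G' = - (D ** ?Mi)" using z by (metis add.commute eq_neg_iff_add_eq_0)
  also have "?Mi ** - (D ** ?Mi) = - (?Mi ** D ** ?Mi)" by (simp add: mm_neg_l matrix_mul_assoc)
  finally show ?thesis using mg by simp
qed

lemma tr_outer: "trace ((A::real^'n^'n) ** outer u ** B) = u \<bullet> ((B ** A) *v u)"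
proof -
  have "trace ((A ** outer u) ** B) = trace (B ** (A ** outer u))" by (rule trace_mul_sym)
  also have "\<dots> = trace ((B ** A) ** outer u)" by (simp add: matrix_mul_assoc)
  also have "\<dots> = u \<bullet> ((B ** A) *v u)"
    by (simp add: trace_def matrix_matrix_mult_def outer_def inner_vec_def matrix_vector_mult_def
        sum_distrib_left mult_ac)
  finally show ?thesis .
qed

lemma q_transpose: "u \<bullet> (transpose (M::real^'n^'n) *v u) = u \<bullet> (M *v u)"
  by (metis dot_lmul_matrix inner_commute transpose_matrix_vector)

lemma algA:
  fixes R S F :: "real^'n^'n"
  assumes sR: "transpose R = R" and sS: "transpose S = S" and sF: "transpose F = F"
  shows "trace (F ** ((- (R ** (c *\<^sub>R outer u) ** R) ** S) ** R))
       + trace (F ** ((R ** S) ** - (R ** (c *\<^sub>R outer u) ** R)))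
       = - (2*c) * (u \<bullet> ((R ** S ** R ** F ** R) *v u))"
proof -
  have 1: "trace (F ** ((- (R ** (c *\<^sub>R outer u) ** R) ** S) ** R)) = - c * trace ((F ** R) ** outer u ** (R ** S ** R))"
    by (simp add: mm_neg_l mm_neg_r mm_scale_l mm_scale_r trace_neg trace_scale matrix_mul_assoc)
  have 2: "trace (F ** ((R ** S) ** - (R ** (c *\<^sub>R outer u) ** R))) = - c * trace ((F ** R ** S ** R) ** outer u ** R)"
    by (simp add: mm_neg_l mm_neg_r mm_scale_l mm_scale_r trace_neg trace_scale matrix_mul_assoc)
  have 3: "transpose (R ** F ** R ** S ** R) = R ** S ** R ** F ** R"
    by (simp add: matrix_transpose_mul sR sS sF matrix_mul_assoc)
  have 4: "u \<bullet> ((R ** (F ** R ** S ** R)) *v u) = u \<bullet> ((R ** S ** R ** F ** R) *v u)"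
    using q_transpose[of u "R ** F ** R ** S ** R"] 3 by (simp add: matrix_mul_assoc)
  show ?thesis unfolding 1 2 tr_outer 4 by (simp add: matrix_mul_assoc)
qed

lemma algB:
  fixes R X Spq F :: "real^'n^'n"
  assumes sR: "transpose R = R" and sX: "transpose X = X" and sF: "transpose F = F"
  shows "trace (F ** ((- (R ** (c *\<^sub>R outer u) ** R) ** Spq) ** X))
       + trace (F ** ((X ** transpose Spq) ** - (R ** (c *\<^sub>R outer u) ** R)))
       = - (2*c) * (u \<bullet> ((R ** Spq ** X ** F ** R) *v u))"
proof -
  have 1: "trace (F ** ((- (R ** (c *\<^sub>R outer u) ** R) ** Spq) ** X)) = - c * trace ((F ** R) ** outer u ** (R ** Spq ** X))"
    by (simp add: mm_neg_l mm_neg_r mm_scale_l mm_scale_r trace_neg trace_scale matrix_mul_assoc)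
  have 2: "trace (F ** ((X ** transpose Spq) ** - (R ** (c *\<^sub>R outer u) ** R))) = - c * trace ((F ** X ** transpose Spq ** R) ** outer u ** R)"
    by (simp add: mm_neg_l mm_neg_r mm_scale_l mm_scale_r trace_neg trace_scale matrix_mul_assoc)
  have 3: "transpose (R ** F ** X ** transpose Spq ** R) = R ** Spq ** X ** F ** R"
    by (simp add: matrix_transpose_mul sR sX sF matrix_mul_assoc)
  have 4: "u \<bullet> ((R ** (F ** X ** transpose Spq ** R)) *v u) = u \<bullet> ((R ** Spq ** X ** F ** R) *v u)"
    using q_transpose[of u "R ** F ** X ** transpose Spq ** R"] 3 by (simp add: matrix_mul_assoc)
  show ?thesis unfolding 1 2 tr_outer 4 by (simp add: matrix_mul_assoc)
qed

lemma algC: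
  fixes R X Spq F :: "real^'n^'n"
  assumes sR: "transpose R = R" and sX: "transpose X = X" and sF: "transpose F = F"
  shows "trace (F ** ((R ** Spq) ** - (X ** (c *\<^sub>R outer u) ** X)))
       + trace (F ** ((- (X ** (c *\<^sub>R outer u) ** X) ** transpose Spq) ** R))
       = - (2*c) * (u \<bullet> ((X ** F ** R ** Spq ** X) *v u))"
proof -
  have 1: "trace (F ** ((R ** Spq) ** - (X ** (c *\<^sub>R outer u) ** X))) = - c * trace ((F ** R ** Spq ** X) ** outer u ** X)"
    by (simp add: mm_neg_l mm_neg_r mm_scale_l mm_scale_r trace_neg trace_scale matrix_mul_assoc)
  have 2: "trace (F ** ((- (X ** (c *\<^sub>R outer u) ** X) ** transpose Spq) ** R)) = - c * trace ((F ** X) ** outer u ** (X ** transpose Spq ** R))"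
    by (simp add: mm_neg_l mm_neg_r mm_scale_l mm_scale_r trace_neg trace_scale matrix_mul_assoc)
  have 3: "transpose (X ** transpose Spq ** R ** F ** X) = X ** F ** R ** Spq ** X"
    by (simp add: matrix_transpose_mul sR sX sF matrix_mul_assoc)
  have 4: "u \<bullet> ((X ** transpose Spq ** R ** (F ** X)) *v u) = u \<bullet> ((X ** F ** R ** Spq ** X) *v u)"
    using q_transpose[of u "X ** transpose Spq ** R ** F ** X"] 3 by (simp add: matrix_mul_assoc)
  show ?thesis unfolding 1 2 tr_outer 4 by (simp add: matrix_mul_assoc)
qed

lemma line_sum:
  fixes a :: "'l::finite \<Rightarrow> real^'n"
  shows "(1/2) *\<^sub>R (\<Sum>k\<in>UNIV. ((b + t *\<^sub>R axis l 1) $ k / r k) *\<^sub>R outer (a k))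
     = (1/2) *\<^sub>R (\<Sum>k\<in>UNIV. (b $ k / r k) *\<^sub>R outer (a k)) + t *\<^sub>R ((1 / (2 * r l)) *\<^sub>R outer (a l))"
proof -
  have "(\<Sum>k\<in>UNIV. ((b + t *\<^sub>R axis l 1) $ k / r k) *\<^sub>R outer (a k))
      = (\<Sum>k\<in>UNIV. (b $ k / r k) *\<^sub>R outer (a k) + (if k = l then (t / r l) *\<^sub>R outer (a l) else 0))"
    by (rule sum.cong) (auto simp: axis_def add_divide_distrib scaleR_add_left)
  also have "\<dots> = (\<Sum>k\<in>UNIV. (b $ k / r k) *\<^sub>R outer (a k)) + (t / r l) *\<^sub>R outer (a l)"
    by (simp add: sum.distrib)
  finally show ?thesis by (simp add: scaleR_add_right)
qed

lemma Rinv_line: "Rinv a r (b + t *\<^sub>R axis l 1) = Rinv a r b + t *\<^sub>R ((1 / (2 * r l)) *\<^sub>R outer (a l))"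
  unfolding Rinv_def by (rule line_sum)
lemma Xinv_line: "Xinv a x (b + t *\<^sub>R axis l 1) = Xinv a x b + t *\<^sub>R ((1 / (2 * x l)) *\<^sub>R outer (a l))"
  unfolding Xinv_def by (rule line_sum)

lemma ln_deriv:
  assumes d: "(d has_real_derivative d') (at 0)" and nz: "d 0 \<noteq> 0"
  shows "((\<lambda>t. ln (d t)) has_real_derivative d' / d 0) (at 0)"
proof (cases "d 0 > 0")
  case True
  then show ?thesis using DERIV_chain2[OF DERIV_ln_divide[OF True] d] by simp
next
  case False
  then have n: "- d 0 > 0" using nz by simp
  have e: "ln (d t) = ln (- d t)" for t by (simp add: ln_real_def)
  have "((\<lambda>t. - d t) has_real_derivative - d') (at 0)" using d by (rule DERIV_minus)
  from DERIV_chain2[OF DERIV_ln_divide[OF n] this] show ?thesis by (simp add: e)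
qed

lemma pd_invertible:
  fixes M :: "real^'n^'n"
  assumes "pos_def M" shows "invertible M"
proof -
  have z: "M *v v = 0 \<Longrightarrow> v = 0" for v
    using assms unfolding pos_def_def by (metis inner_zero_right less_irrefl)
  have "inj ((*v) M)"
  proof (rule injI)
    fix u v assume "M *v u = M *v v"
    then have "M *v (u - v) = 0" by (simp add: matrix_vector_mult_diff_distrib)
    then have "u - v = 0" using z by blast
    then show "u = v" by simp
  qed
  then show ?thesis
    using invertible_left_inverse matrix_left_invertible_injective by blast
qed

lemma Rinv_sym: "transpose (Rinv a r b) = Rinv a r b"
  by (simp add: Rinv_def transpose_def outer_def vec_eq_iff sum_component mult.commute)
lemma Xinv_sym: "transpose (Xinv a x b) = Xinv a x b"
  by (simp add: Xinv_def transpose_def outer_def vec_eq_iff sum_component mult.commute)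
lemma transpose_diff': "transpose ((A::real^'n^'n) - B) = transpose A - transpose B"
  by (simp add: transpose_def vec_eq_iff)
lemma transpose_add': "transpose ((A::real^'n^'n) + B) = transpose A + transpose B"
  by (simp add: transpose_def vec_eq_iff)
lemma transpose_smat: "transpose ((c::real) *\<^sub>R mat 1 :: real^'n^'n) = c *\<^sub>R mat 1"
  by (simp add: transpose_scalar)

theorem lemma1:
  fixes a :: "'l::finite \<Rightarrow> real^'n" and r x :: "'l \<Rightarrow> real"
    and Sp Sq Spq Sh :: "real^'n^'n" and sn2 :: real and b :: "real^'l" and l :: 'l
  assumes r_pos: "\<And>k. r k > 0" and x_pos: "\<And>k. x k > 0"
    and Sp_sym: "transpose Sp = Sp" and Sq_sym: "transpose Sq = Sq"
    and sn2: "sn2 \<ge> 0"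
    and Sh: "pos_semidef Sh"
    and R_ex: "invertible (Rinv a r b)" and X_ex: "invertible (Xinv a x b)"
    and S_pd: "pos_def (SigmaM a r x Sp Sq Spq sn2 b)"
  shows "let R = matrix_inv (Rinv a r b); X = matrix_inv (Xinv a x b);
             Si = matrix_inv (SigmaM a r x Sp Sq Spq sn2 b);
             F = Si - Si ** Sh ** Si
         in ((\<lambda>t. fobj a r x Sp Sq Spq sn2 Sh (b + t *\<^sub>R axis l 1)) has_real_derivative
              (- (1 / r l) * (a l \<bullet> ((R ** Sp ** R ** F ** R) *v a l))
               - (1 / x l) * (a l \<bullet> ((X ** Sq ** X ** F ** X) *v a l))
               - (1 / r l) * (a l \<bullet> ((R ** Spq ** X ** F ** R) *v a l))
               - (1 / x l) * (a l \<bullet> ((X ** F ** R ** Spq ** X) *v a l)))) (at 0)"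
proof -
  define R where "R = matrix_inv (Rinv a r b)"
  define X where "X = matrix_inv (Xinv a x b)"
  define S where "S = SigmaM a r x Sp Sq Spq sn2 b"
  define Si where "Si = matrix_inv S"
  define F where "F = Si - Si ** Sh ** Si"
  define cr where "cr = 1 / (2 * r l)"
  define cx where "cx = 1 / (2 * x l)"
  define P where "P = outer (a l)"
  define Rt where "Rt = (\<lambda>t. matrix_inv (Rinv a r (b + t *\<^sub>R axis l 1)))"
  define Xt where "Xt = (\<lambda>t. matrix_inv (Xinv a x (b + t *\<^sub>R axis l 1)))"
  define Sig where "Sig = (\<lambda>t. SigmaM a r x Sp Sq Spq sn2 (b + t *\<^sub>R axis l 1))"
  define R' where "R' = - (R ** (cr *\<^sub>R P) ** R)"
  define X' where "X' = - (X ** (cx *\<^sub>R P) ** X)"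
  have mR: "mder Rt R'"
  proof -
    have "mder (\<lambda>t. Rinv a r (b + t *\<^sub>R axis l 1)) (cr *\<^sub>R P)"
      unfolding Rinv_line cr_def P_def by (rule mder_lin)
    from mder_inv[OF this] show ?thesis using R_ex by (simp add: Rt_def R'_def R_def)
  qed
  have mX: "mder Xt X'"
  proof -
    have "mder (\<lambda>t. Xinv a x (b + t *\<^sub>R axis l 1)) (cx *\<^sub>R P)"
      unfolding Xinv_line cx_def P_def by (rule mder_lin)
    from mder_inv[OF this] show ?thesis using X_ex by (simp add: Xt_def X'_def X_def)
  qed
  have R0: "Rt 0 = R" by (simp add: Rt_def R_def)
  have X0: "Xt 0 = X" by (simp add: Xt_def X_def)
  have Sig_eq: "Sig = (\<lambda>t. Rt t ** Sp ** Rt t + Xt t ** Sq ** Xt t + Rt t ** Spq ** Xt t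
      + Xt t ** transpose Spq ** Rt t + sn2 *\<^sub>R mat 1)"
    by (simp add: Sig_def SigmaM_def Rt_def Xt_def Let_def)
  define S' where "S' = (((R' ** Sp) ** R + (R ** Sp) ** R') + ((X' ** Sq) ** X + (X ** Sq) ** X')
      + ((R' ** Spq) ** X + (R ** Spq) ** X') + ((X' ** transpose Spq) ** R + (X ** transpose Spq) ** R')) + 0"
  have mS: "mder Sig S'"
    unfolding Sig_eq S'_def
    by (intro mder_add mder_mult[OF mder_rconst] mR mX mder_const R0 X0 refl; simp add: R0 X0)
  have S0: "Sig 0 = S" by (simp add: Sig_def S_def)
  have Sinv: "invertible S" using S_pd pd_invertible S_def by blast
  have dS: "det S \<noteq> 0" using Sinv invertible_det_nz by blast
  have d1: "((\<lambda>t. ln (det (Sig t))) has_real_derivative trace (Si ** S')) (at 0)"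
    using ln_deriv[OF det_deriv[OF mS] ] S0 Sinv dS by (simp add: Si_def)
  have mSi: "mder (\<lambda>t. matrix_inv (Sig t)) (- (Si ** S' ** Si))"
    using mder_inv[OF mS] S0 Sinv by (simp add: Si_def)
  have d2: "((\<lambda>t. trace (matrix_inv (Sig t) ** Sh)) has_real_derivative trace (- (Si ** S' ** Si) ** Sh)) (at 0)"
    by (rule mder_trace[OF mder_rconst[OF mSi]])
  have d: "((\<lambda>t. fobj a r x Sp Sq Spq sn2 Sh (b + t *\<^sub>R axis l 1)) has_real_derivative
      trace (Si ** S') + trace (- (Si ** S' ** Si) ** Sh)) (at 0)"
    using DERIV_add[OF d1 d2] by (simp add: fobj_def Sig_def Let_def)
  have sR: "transpose R = R" unfolding R_def by (rule minv_sym[OF R_ex Rinv_sym])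
  have sX: "transpose X = X" unfolding X_def by (rule minv_sym[OF X_ex Xinv_sym])
  have sS: "transpose S = S" using S_pd by (simp add: pos_def_def S_def)
  have sSi: "transpose Si = Si" unfolding Si_def by (rule minv_sym[OF Sinv sS])
  have sSh: "transpose Sh = Sh" using Sh by (simp add: pos_semidef_def)
  have sF: "transpose F = F"
    by (simp add: F_def transpose_diff' matrix_transpose_mul sSi sSh matrix_mul_assoc)
  have tF: "trace (Si ** S') + trace (- (Si ** S' ** Si) ** Sh) = trace (F ** S')"
  proof -
    have "trace (Si ** S' ** Si ** Sh) = trace ((Si ** S') ** (Si ** Sh))" by (simp add: matrix_mul_assoc)
    also have "\<dots> = trace ((Si ** Sh) ** (Si ** S'))" by (rule trace_mul_sym)
    finally have "trace (Si ** S' ** Si ** Sh) = trace (Si ** Sh ** Si ** S')" by (simp add: matrix_mul_assoc)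
    then show ?thesis by (simp add: F_def mm_diff_r trace_sub mm_neg_r trace_neg)
  qed
  have main: "trace (F ** S') =
      - (1 / r l) * (a l \<bullet> ((R ** Sp ** R ** F ** R) *v a l))
      - (1 / x l) * (a l \<bullet> ((X ** Sq ** X ** F ** X) *v a l))
      - (1 / r l) * (a l \<bullet> ((R ** Spq ** X ** F ** R) *v a l))
      - (1 / x l) * (a l \<bullet> ((X ** F ** R ** Spq ** X) *v a l))"
  proof -
    have A1: "trace (F ** ((R' ** Sp) ** R)) + trace (F ** ((R ** Sp) ** R'))
        = - (2*cr) * (a l \<bullet> ((R ** Sp ** R ** F ** R) *v a l))"
      unfolding R'_def P_def by (rule algA[OF sR Sp_sym sF])
    have A2: "trace (F ** ((X' ** Sq) ** X)) + trace (F ** ((X ** Sq) ** X'))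
        = - (2*cx) * (a l \<bullet> ((X ** Sq ** X ** F ** X) *v a l))"
      unfolding X'_def P_def by (rule algA[OF sX Sq_sym sF])
    have B: "trace (F ** ((R' ** Spq) ** X)) + trace (F ** ((X ** transpose Spq) ** R'))
        = - (2*cr) * (a l \<bullet> ((R ** Spq ** X ** F ** R) *v a l))"
      unfolding R'_def P_def by (rule algB[OF sR sX sF])
    have C: "trace (F ** ((R ** Spq) ** X')) + trace (F ** ((X' ** transpose Spq) ** R))
        = - (2*cx) * (a l \<bullet> ((X ** F ** R ** Spq ** X) *v a l))"
      unfolding X'_def P_def by (rule algC[OF sR sX sF])
    have E: "trace (F ** S') = (trace (F ** ((R' ** Sp) ** R)) + trace (F ** ((R ** Sp) ** R')))
       + (trace (F ** ((X' ** Sq) ** X)) + trace (F ** ((X ** Sq) ** X')))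
       + (trace (F ** ((R' ** Spq) ** X)) + trace (F ** ((X ** transpose Spq) ** R')))
       + (trace (F ** ((R ** Spq) ** X')) + trace (F ** ((X' ** transpose Spq) ** R)))"
      unfolding S'_def by (simp add: mm_add_l trace_add mm_zero_r trace_0[simplified mat_0])
    have c1: "2 * cr = 1 / r l" by (simp add: cr_def)
    have c2: "2 * cx = 1 / x l" by (simp add: cx_def)
    show ?thesis unfolding E A1 A2 B C c1[symmetric] c2[symmetric] by simp
  qed
  show ?thesis using d unfolding tF main by (simp add: Let_def R_def X_def S_def Si_def F_def)
qed

end
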